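(* Let $R$ be a commutative multiplicative hyperring with identity, let $\alpha$ be a good endomorphism of $R$, and let $I$ be an $\alpha$-prime hyperideal of $R$. If $y\in R$ and $(\alpha(y))^n\subseteq I$ for some $n\in\mathbb N$, then $\alpha^2(y)=\alpha(\alpha(y))\in I$.
   Context: A multiplicative hyperring is an abelian group $(R,+)$ with a hyperoperation $\circ:R\times R\to \mathcal P^*(R)$ (nonempty subsets) such that $a\circ(b\circ c)=(a\circ b)\circ c$, $a\circ(b+c)\subseteq a\circ b+a\circ c$, $(b+c)\circ a\subseteq b\circ a+c\circ a$, and $a\circ(-b)=(-a)\circ b=-(a\circ b)$. Products of subsets are unions of elementwise products, and $x^n=x\circ\cdots\circ x$ ($n$ factors). Commutative means $a\circ b=b\circ a$. An identity $1$ satisfies $a\in1\circ a$ for all $a$. A hyperideal is a nonempty $I\subseteq R$ closed under subtraction with $r\circ x\subseteq I$ for $r\in R$, $x\in I$. Standing assumption: every hyperideal is a $\mathbf C$-hyperideal, i.e. for every finite product $A=r_1\circ\cdots\circ r_n$, $A\cap I\ne\emptyset$ implies $A\subseteq I$. A good endomorphism $\alpha$ satisfies $\alpha(x+y)=\alpha(x)+\alpha(y)$ and $\alpha(x\circ y)=\alpha(x)\circ\alpha(y)$. A hyperideal $I$ is $\alpha$-prime if for all $x,y$, $x\circ y\subseteq I$ implies $x\in I$ or $\alpha(y)\in I$. *)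

theory Defs
  imports Main
begin

text \<open>A hyperoperation on the carrier (the whole type 'a, an abelian group under +)
  is a map mult :: 'a => 'a => 'a set.\<close>

definition hsetmult :: "('a \<Rightarrow> 'a \<Rightarrow> 'a set) \<Rightarrow> 'a set \<Rightarrow> 'a set \<Rightarrow> 'a set" where
  "hsetmult m A B = (\<Union>a\<in>A. \<Union>b\<in>B. m a b)"

definition hsetplus :: "'a::ab_group_add set \<Rightarrow> 'a set \<Rightarrow> 'a set" where
  "hsetplus A B = {a + b | a b. a \<in> A \<and> b \<in> B}"

fun hlistprod :: "('a \<Rightarrow> 'a \<Rightarrow> 'a set) \<Rightarrow> 'a list \<Rightarrow> 'a set" where
  "hlistprod m [] = {}"
| "hlistprod m [r] = {r}"
| "hlistprod m (r # rs) = hsetmult m {r} (hlistprod m rs)"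

definition hpow :: "('a \<Rightarrow> 'a \<Rightarrow> 'a set) \<Rightarrow> 'a \<Rightarrow> nat \<Rightarrow> 'a set" where
  "hpow m x n = hlistprod m (replicate n x)"

definition mult_hyperring :: "('a::ab_group_add \<Rightarrow> 'a \<Rightarrow> 'a set) \<Rightarrow> bool" where
  "mult_hyperring m \<longleftrightarrow>
     (\<forall>a b. m a b \<noteq> {}) \<and>
     (\<forall>a b c. hsetmult m {a} (m b c) = hsetmult m (m a b) {c}) \<and>
     (\<forall>a b c. m a (b + c) \<subseteq> hsetplus (m a b) (m a c)) \<and>
     (\<forall>a b c. m (b + c) a \<subseteq> hsetplus (m b a) (m c a)) \<and>
     (\<forall>a b. m a (- b) = uminus ` (m a b) \<and> m (- a) b = uminus ` (m a b))"

definition hcomm :: "('a \<Rightarrow> 'a \<Rightarrow> 'a set) \<Rightarrow> bool" where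
  "hcomm m \<longleftrightarrow> (\<forall>a b. m a b = m b a)"

definition has_hidentity :: "('a \<Rightarrow> 'a \<Rightarrow> 'a set) \<Rightarrow> bool" where
  "has_hidentity m \<longleftrightarrow> (\<exists>e. \<forall>a. a \<in> m e a)"

definition hyperideal :: "('a::ab_group_add \<Rightarrow> 'a \<Rightarrow> 'a set) \<Rightarrow> 'a set \<Rightarrow> bool" where
  "hyperideal m I \<longleftrightarrow> I \<noteq> {} \<and> (\<forall>x\<in>I. \<forall>y\<in>I. x - y \<in> I) \<and>
     (\<forall>r x. x \<in> I \<longrightarrow> m r x \<subseteq> I)"

definition C_hyperideal :: "('a::ab_group_add \<Rightarrow> 'a \<Rightarrow> 'a set) \<Rightarrow> 'a set \<Rightarrow> bool" where
  "C_hyperideal m I \<longleftrightarrow> (\<forall>rs. rs \<noteq> [] \<longrightarrow> hlistprod m rs \<inter> I \<noteq> {} \<longrightarrow> hlistprod m rs \<subseteq> I)"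

definition good_endo :: "('a::ab_group_add \<Rightarrow> 'a \<Rightarrow> 'a set) \<Rightarrow> ('a \<Rightarrow> 'a) \<Rightarrow> bool" where
  "good_endo m \<alpha> \<longleftrightarrow> (\<forall>x y. \<alpha> (x + y) = \<alpha> x + \<alpha> y) \<and> (\<forall>x y. \<alpha> ` (m x y) = hsetmult m {\<alpha> x} {\<alpha> y})"

definition alpha_prime :: "('a::ab_group_add \<Rightarrow> 'a \<Rightarrow> 'a set) \<Rightarrow> ('a \<Rightarrow> 'a) \<Rightarrow> 'a set \<Rightarrow> bool" where
  "alpha_prime m \<alpha> I \<longleftrightarrow> hyperideal m I \<and> (\<forall>x y. m x y \<subseteq> I \<longrightarrow> x \<in> I \<or> \<alpha> y \<in> I)"

end

theory Submission
  imports Defs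
begin

lemma hpow_one: "hpow m a (Suc 0) = {a}"
  by (simp add: hpow_def)

lemma hpow_SS: "hpow m a (Suc (Suc k)) = hsetmult m {a} (hpow m a (Suc k))"
  by (simp add: hpow_def)

lemma base_case:
  assumes "has_hidentity m" and "alpha_prime m \<alpha> I" and "a \<in> I" and C: "hcomm m"
  shows "\<alpha> a \<in> I"
proof -
  obtain e where e: "\<And>x. x \<in> m e x" using assms(1) unfolding has_hidentity_def by blast
  have P: "\<And>x y. m x y \<subseteq> I \<Longrightarrow> x \<in> I \<or> \<alpha> y \<in> I"
    using assms(2) unfolding alpha_prime_def by blast
  have hI: "\<And>r x. x \<in> I \<Longrightarrow> m r x \<subseteq> I"
    using assms(2) unfolding alpha_prime_def hyperideal_def by blast
  have "m e a \<subseteq> I" using hI assms(3) by simp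
  then have "e \<in> I \<or> \<alpha> a \<in> I" using P by simp
  then show ?thesis
  proof
    assume "e \<in> I"
    then have "m e (\<alpha> a) \<subseteq> I" using hI C unfolding hcomm_def by metis
    then show ?thesis using e by (meson subsetD)
  qed
qed

lemma key:
  assumes "hcomm m" "has_hidentity m" "alpha_prime m \<alpha> I"
  shows "hpow m a (Suc k) \<subseteq> I \<Longrightarrow> \<alpha> a \<in> I"
proof (induction k)
  case 0
  then show ?case using base_case[OF assms(2,3) _ assms(1)] by (simp add: hpow_one)
next
  case (Suc k)
  show ?case
  proof (cases "\<alpha> a \<in> I")
    case True then show ?thesis .
  next
    case False
    have "hpow m a (Suc k) \<subseteq> I"
    proof
      fix x assume x: "x \<in> hpow m a (Suc k)"
      have "m a x \<subseteq> I" using Suc.prems x unfolding hpow_SS hsetmult_def by auto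
      then have "m x a \<subseteq> I" using assms(1) unfolding hcomm_def by simp
      moreover have "\<And>x y. m x y \<subseteq> I \<Longrightarrow> x \<in> I \<or> \<alpha> y \<in> I"
        using assms(3) unfolding alpha_prime_def by blast
      ultimately show "x \<in> I" using False by blast
    qed
    then show ?thesis using Suc.IH by blast
  qed
qed

theorem mainTheorem9:
  fixes m :: "'a::ab_group_add \<Rightarrow> 'a \<Rightarrow> 'a set" and \<alpha> :: "'a \<Rightarrow> 'a"
    and I :: "'a set" and y :: 'a and n :: nat
  assumes "mult_hyperring m" and "hcomm m" and "has_hidentity m"
    and "\<forall>J. hyperideal m J \<longrightarrow> C_hyperideal m J"
    and "good_endo m \<alpha>"
    and "alpha_prime m \<alpha> I"
    and "n \<ge> 1"
    and "hpow m (\<alpha> y) n \<subseteq> I"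
  shows "\<alpha> (\<alpha> y) \<in> I"
proof -
  obtain k where "n = Suc k" using assms(7) by (cases n) auto
  then show ?thesis using key[OF assms(2,3,6)] assms(8) by blast
qed

end
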